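(* Let $F:\mathbb Z^2\to\Lambda \mathrm{SU}_2$ be a discrete extended frame with data $u,p,q$ (as defined in the context). For every $(n,m)\in\mathbb Z^2$ decompose $F(n,m)$ by the two Birkhoff decompositions $$F=F_+F_-=G_-G_+,\qquad F_+\in\Lambda^+_*\mathrm{SU}_2,\ F_-\in\Lambda^-\mathrm{SU}_2,\ G_-\in\Lambda^-_*\mathrm{SU}_2,\ G_+\in\Lambda^+\mathrm{SU}_2 .$$ Then $F_+(n,m)$ does not depend on $m$ and $G_-(n,m)$ does not depend on $n$, and $$\xi_+:=F_+(n,m)^{-1}F_+(n+1,m)=\frac{1}{\Delta_+}\begin{pmatrix}1&\frac{i}{2}p\,e^{-i\alpha}\lambda\\ \frac{i}{2}p\,e^{i\alpha}\lambda&1\end{pmatrix},\qquad \xi_-:=G_-(n,m)^{-1}G_-(n,m+1)=\frac{1}{\Delta_-}\begin{pmatrix}1&-\frac{i}{2}q\,e^{i\beta}\lambda^{-1}\\ -\frac{i}{2}q\,e^{-i\beta}\lambda^{-1}&1\end{pmatrix},$$ where $p=p(n)$, $q=q(m)$, and $\alpha=\alpha(n)$, $\beta=\beta(m)$ are given by $$\alpha(n)=\tfrac12 u(n+1,0)+\tfrac12 u(n,0)-u(0,0),\qquad \beta(m)=\tfrac12 u(0,m+1)+\tfrac12 u(0,m).$$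
   Context: Pauli matrices: $\sigma_1=\begin{pmatrix}0&1\\1&0\end{pmatrix}$, $\sigma_2=\begin{pmatrix}0&-i\\i&0\end{pmatrix}$, $\sigma_3=\begin{pmatrix}1&0\\0&-1\end{pmatrix}$. Loop groups: $\Lambda\mathrm{SU}_2$ is the group of maps $g$ of the spectral parameter $\lambda$ (defined on $S^1\cup\mathbb R^\times$) into $\mathrm{SL}_2\mathbb C$ whose matrix entries lie in the Wiener algebra $\{\sum_{k\in\mathbb Z}f_k\lambda^k:\sum|f_k|<\infty\}$, satisfying the reality condition $g(\lambda)=\big(\overline{g(\bar\lambda)}^{\,t}\big)^{-1}$ and the twisting condition $\sigma_3g(\lambda)\sigma_3^{-1}=g(-\lambda)$. $\Lambda^+\mathrm{SU}_2$ (resp. $\Lambda^-\mathrm{SU}_2$) is the subgroup of loops extending holomorphically to the open unit disk (resp. to $\{|\lambda|>1\}\cup\{\infty\}$); $\Lambda^+_*\mathrm{SU}_2=\{g\in\Lambda^+\mathrm{SU}_2:g(0)=\mathrm{Id}\}$ and $\Lambda^-_*\mathrm{SU}_2=\{g\in\Lambda^-\mathrm{SU}_2:g(\infty)=\mathrm{Id}\}$. Birkhoff decomposition (known fact): the multiplication maps $\Lambda^+_*\mathrm{SU}_2\times\Lambda^-\mathrm{SU}_2\to\Lambda\mathrm{SU}_2$ and $\Lambda^-_*\mathrm{SU}_2\times\Lambda^+\mathrm{SU}_2\to\Lambda\mathrm{SU}_2$ are diffeomorphisms onto $\Lambda\mathrm{SU}_2$; so every loop factors uniquely in each of these two ways.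 Discrete setting: for a function $f$ on $\mathbb Z^2$ write $f_1=f(n+1,m)$, $f_2=f(n,m+1)$, $f_{12}=f(n+1,m+1)$. Let $p:\mathbb Z\to\mathbb R$ (a function of $n$) and $q:\mathbb Z\to\mathbb R$ (a function of $m$) satisfy $0<|p/2|<1$, $0<|q/2|<1$, and put $\Delta_+=\sqrt{1+(p/2)^2\lambda^2}$, $\Delta_-=\sqrt{1+(q/2)^2\lambda^{-2}}$ (branches positive for $\lambda>0$; $\Delta_+$ is holomorphic and nonvanishing on the closed unit disk, $\Delta_-$ on its closed exterior including $\infty$). For $u:\mathbb Z^2\to\mathbb R$ set $$U=\frac1{\Delta_+}\begin{pmatrix}e^{-\frac i2(u_1-u)}&\frac i2p\lambda\\ \frac i2p\lambda&e^{\frac i2(u_1-u)}\end{pmatrix},\qquad V=\frac1{\Delta_-}\begin{pmatrix}1&-\frac i2q\,e^{\frac i2(u_2+u)}\lambda^{-1}\\ -\frac i2q\,e^{-\frac i2(u_2+u)}\lambda^{-1}&1\end{pmatrix}.$$ A discrete extended frame with data $u,p,q$ is a map $F:\mathbb Z^2\to\Lambda\mathrm{SU}_2$ with $F(0,0)=\mathrm{Id}$, $F_1=FU$ and $F_2=FV$. (Its compatibility $VU_2=UV_1$ is the discrete sine-Gordon equation $\sin\frac{u_{12}-u_1-u_2+u}{4}=\frac{pq}{4}\sin\frac{u_{12}+u_1+u_2+u}{4}$.) The associated discrete pseudospherical surfaces are $f^\lambda=\lambda\,(\partial_\lambda F)F^{-1}$, $\lambda>0$. *)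

theory Defs
  imports "HOL-Analysis.Analysis"
begin

text \<open>Loops are maps from the unit circle into 2x2 complex matrices; a loop is
represented by a function on complex numbers of which only the values on the
unit circle are relevant.\<close>

type_synonym cmat = "complex ^ 2 ^ 2"
type_synonym loop = "complex \<Rightarrow> cmat"

definition S1 :: "complex set" where
  "S1 = {z. norm z = 1}"

definition mat2 :: "complex \<Rightarrow> complex \<Rightarrow> complex \<Rightarrow> complex \<Rightarrow> cmat" where
  "mat2 a b c d = (\<chi> i j. if i = 1 then (if j = 1 then a else b) else (if j = 1 then c else d))"

definition sigma3 :: cmat where
  "sigma3 = mat2 1 0 0 (-1)"

definition ctrans :: "cmat \<Rightarrow> cmat" where
  "ctrans A = (\<chi> i j. cnj (A $ j $ i))"

definition wiener_coeffs :: "loop \<Rightarrow> (int \<Rightarrow> cmat) \<Rightarrow> bool" where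
  "wiener_coeffs g c \<longleftrightarrow>
     (\<forall>i j. (\<lambda>k. norm (c k $ i $ j)) summable_on UNIV) \<and>
     (\<forall>z\<in>S1. \<forall>i j. ((\<lambda>k. c k $ i $ j * z powi k) has_sum (g z $ i $ j)) UNIV)"

definition LSU2 :: "loop \<Rightarrow> bool" where
  "LSU2 g \<longleftrightarrow> (\<exists>c. wiener_coeffs g c) \<and>
     (\<forall>z\<in>S1. det (g z) = 1) \<and>
     (\<forall>z\<in>S1. g z = matrix_inv (ctrans (g (cnj z)))) \<and>
     (\<forall>z\<in>S1. sigma3 ** g z ** matrix_inv sigma3 = g (- z))"

text \<open>Lambda^+ : only non-negative powers; Lambda^+_* : additionally g(0) = Id.\<close>
definition LSU2_plus :: "loop \<Rightarrow> bool" where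
  "LSU2_plus g \<longleftrightarrow> LSU2 g \<and> (\<exists>c. wiener_coeffs g c \<and> (\<forall>k<0. c k = 0))"

definition LSU2_plus_star :: "loop \<Rightarrow> bool" where
  "LSU2_plus_star g \<longleftrightarrow> LSU2 g \<and>
     (\<exists>c. wiener_coeffs g c \<and> (\<forall>k<0. c k = 0) \<and> c 0 = mat 1)"

text \<open>Lambda^- : only non-positive powers; Lambda^-_* : additionally g(infinity) = Id.\<close>
definition LSU2_minus :: "loop \<Rightarrow> bool" where
  "LSU2_minus g \<longleftrightarrow> LSU2 g \<and> (\<exists>c. wiener_coeffs g c \<and> (\<forall>k>0. c k = 0))"

definition LSU2_minus_star :: "loop \<Rightarrow> bool" where
  "LSU2_minus_star g \<longleftrightarrow> LSU2 g \<and>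
     (\<exists>c. wiener_coeffs g c \<and> (\<forall>k>0. c k = 0) \<and> c 0 = mat 1)"

text \<open>Delta_+ and Delta_- (principal square root = branch positive for real lambda > 0,
holomorphic on the relevant closed regions since |p/2|,|q/2| < 1).\<close>
definition Delta_plus :: "real \<Rightarrow> complex \<Rightarrow> complex" where
  "Delta_plus p z = csqrt (1 + (complex_of_real (p / 2))\<^sup>2 * z\<^sup>2)"

definition Delta_minus :: "real \<Rightarrow> complex \<Rightarrow> complex" where
  "Delta_minus q z = csqrt (1 + (complex_of_real (q / 2))\<^sup>2 * inverse (z\<^sup>2))"

definition Umat :: "(int \<Rightarrow> int \<Rightarrow> real) \<Rightarrow> (int \<Rightarrow> real) \<Rightarrow> int \<Rightarrow> int \<Rightarrow> loop" where
  "Umat u p n m z =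
     (let D = Delta_plus (p n) z;
          e = exp (- \<i> * complex_of_real ((u (n + 1) m - u n m) / 2));
          off = \<i> / 2 * complex_of_real (p n) * z
      in mat2 (e / D) (off / D) (off / D) (cnj e / D))"

definition Vmat :: "(int \<Rightarrow> int \<Rightarrow> real) \<Rightarrow> (int \<Rightarrow> real) \<Rightarrow> int \<Rightarrow> int \<Rightarrow> loop" where
  "Vmat u q n m z =
     (let D = Delta_minus (q m) z;
          e = exp (\<i> * complex_of_real ((u n (m + 1) + u n m) / 2));
          c = - \<i> / 2 * complex_of_real (q m) * inverse z
      in mat2 (1 / D) (c * e / D) (c * cnj e / D) (1 / D))"

definition discrete_extended_frame ::
  "(int \<Rightarrow> int \<Rightarrow> loop) \<Rightarrow> (int \<Rightarrow> int \<Rightarrow> real) \<Rightarrow> (int \<Rightarrow> real) \<Rightarrow> (int \<Rightarrow> real) \<Rightarrow> bool" where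
  "discrete_extended_frame F u p q \<longleftrightarrow>
     (\<forall>n m. LSU2 (F n m)) \<and>
     (\<forall>z\<in>S1. F 0 0 z = mat 1) \<and>
     (\<forall>n m. \<forall>z\<in>S1. F (n + 1) m z = F n m z ** Umat u p n m z) \<and>
     (\<forall>n m. \<forall>z\<in>S1. F n (m + 1) z = F n m z ** Vmat u q n m z)"

definition xi_plus :: "real \<Rightarrow> real \<Rightarrow> loop" where
  "xi_plus p \<alpha> z =
     (let D = Delta_plus p z in
      mat2 (1 / D) (\<i> / 2 * complex_of_real p * exp (- \<i> * complex_of_real \<alpha>) * z / D)
           (\<i> / 2 * complex_of_real p * exp (\<i> * complex_of_real \<alpha>) * z / D) (1 / D))"

definition xi_minus :: "real \<Rightarrow> real \<Rightarrow> loop" where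
  "xi_minus q \<beta> z =
     (let D = Delta_minus q z in
      mat2 (1 / D) (- \<i> / 2 * complex_of_real q * exp (\<i> * complex_of_real \<beta>) * inverse z / D)
           (- \<i> / 2 * complex_of_real q * exp (- \<i> * complex_of_real \<beta>) * inverse z / D) (1 / D))"

end

theory Submission
  imports Defs "HOL-Complex_Analysis.Cauchy_Integral_Formula"
begin


lemma mat2_nth: "mat2 a b c d $ 1 $ 1 = a" "mat2 a b c d $ 1 $ 2 = b"
  "mat2 a b c d $ 2 $ 1 = c" "mat2 a b c d $ 2 $ 2 = d"
  by (simp_all add: mat2_def)

lemma mat2_eta: "M = mat2 (M$1$1) (M$1$2) (M$2$1) (M$2$2)"
  by (simp add: vec_eq_iff forall_2 mat2_nth)

lemma mat2_eq_iff: "mat2 a b c d = mat2 a' b' c' d' \<longleftrightarrow> a = a' \<and> b = b' \<and> c = c' \<and> d = d'"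
  by (auto simp: vec_eq_iff forall_2 mat2_nth)

lemma mat2_mult: "mat2 a b c d ** mat2 a' b' c' d' =
   mat2 (a*a' + b*c') (a*b' + b*d') (c*a' + d*c') (c*b' + d*d')"
  by (simp add: vec_eq_iff forall_2 mat2_nth matrix_matrix_mult_def sum_2)

lemma mat2_one: "mat 1 = mat2 1 0 0 1"
  by (simp add: vec_eq_iff forall_2 mat2_nth mat_def)

lemma mat2_det: "det (mat2 a b c d) = a*d - b*c"
  by (simp add: det_2 mat2_nth)

lemma mult_nth2: "((A::cmat) ** B) $ i $ j = A$i$1 * B$1$j + A$i$2 * B$2$j"
  by (simp add: matrix_matrix_mult_def sum_2)

definition adj2 :: "cmat \<Rightarrow> cmat" where
  "adj2 M = mat2 (M$2$2) (-M$1$2) (-M$2$1) (M$1$1)"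

lemma adj2_right: "det M = 1 \<Longrightarrow> M ** adj2 M = mat 1"
  apply (subst mat2_eta[of M]) 
  by (simp add: adj2_def mat2_nth mat2_mult mat2_one det_2 mat2_eq_iff algebra_simps)

lemma adj2_left: "det M = 1 \<Longrightarrow> adj2 M ** M = mat 1"
  apply (subst (2) mat2_eta[of M]) 
  by (simp add: adj2_def mat2_nth mat2_mult mat2_one det_2 mat2_eq_iff algebra_simps)

lemma matrix_inv_adj2: "det M = 1 \<Longrightarrow> matrix_inv M = adj2 M"
proof -
  assume d: "det M = 1"
  let ?B = "adj2 M"
  have ex: "M ** ?B = mat 1 \<and> ?B ** M = mat 1" using adj2_right[OF d] adj2_left[OF d] by simp
  then have mi: "M ** matrix_inv M = mat 1 \<and> matrix_inv M ** M = mat 1"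
    unfolding matrix_inv_def by (rule someI)
  have "matrix_inv M = matrix_inv M ** (M ** ?B)" using ex by simp
  also have "\<dots> = (matrix_inv M ** M) ** ?B" by (simp add: matrix_mul_assoc)
  also have "\<dots> = ?B" using mi by simp
  finally show ?thesis .
qed



definition dfun :: "(complex \<Rightarrow> complex) \<Rightarrow> bool" where
  "dfun f \<longleftrightarrow> f holomorphic_on ball 0 1 \<and> continuous_on (cball 0 1) f"

lemma S1_norm: "z \<in> S1 \<Longrightarrow> norm z = 1" by (simp add: S1_def)

lemma glue_ball:
  assumes f: "dfun f" and h: "dfun h" and eq: "\<And>z. z \<in> S1 \<Longrightarrow> f z = h (inverse z)"
    and w: "norm w < 1"
  shows "f w = h 0"
proof -
  define G where "G u = h u / (1 - w * u)" for u
  have nz: "1 - w * u \<noteq> 0" if "norm u \<le> 1" for u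
  proof
    assume "1 - w * u = 0"
    then have "w * u = 1" by simp
    then have "norm w * norm u = 1" by (metis norm_mult norm_one)
    moreover have "norm w * norm u < 1"
      using w that by (metis mult_le_one mult_strict_right_mono norm_ge_zero less_le_trans
          mult.commute mult_left_le order.strict_iff_not)
    ultimately show False by simp
  qed
  have I1: "((\<lambda>u. f u/(u-w)) has_contour_integral (2 * of_real pi * \<i> * f w)) (circlepath 0 1)"
    using f w unfolding dfun_def by (intro Cauchy_integral_circlepath) auto
  have Gc: "continuous_on (cball 0 1) G" unfolding G_def
    using h nz unfolding dfun_def by (intro continuous_intros) auto
  have Gh: "G holomorphic_on ball 0 1" unfolding G_def
    using h nz unfolding dfun_def by (intro holomorphic_intros) auto
  have I2: "((\<lambda>u. G u/(u-0)) has_contour_integral (2 * of_real pi * \<i> * G 0)) (circlepath 0 1)"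
    using Gc Gh by (intro Cauchy_integral_circlepath) auto
  have J1: "((\<lambda>t. f (0 + 1 * cis t)/((0 + 1 * cis t)-w) * 1 * \<i> * cis t) has_integral (2 * of_real pi * \<i> * f w)) {0..2*pi}"
    using I1 unfolding circlepath_def by (subst (asm) has_contour_integral_part_circlepath_iff) auto
  define g where "g t = G (0 + 1 * cis t)/((0 + 1 * cis t)-0) * 1 * \<i> * cis t" for t
  have J2: "(g has_integral (2 * of_real pi * \<i> * G 0)) {0..2*pi}"
    using I2 unfolding circlepath_def g_def by (subst (asm) has_contour_integral_part_circlepath_iff) auto
  then have "((\<lambda>x. g (-x)) has_integral (2 * of_real pi * \<i> * G 0)) {-(2*pi)..-0}"
    by (subst has_integral_reflect_real) 
  then have J3: "((\<lambda>x. g (-(x + -(2*pi)))) has_integral (2 * of_real pi * \<i> * G 0)) {0..2*pi}"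
    using has_integral_shift_real_ivl[of "\<lambda>x. g (-x)" _ "-(2*pi)" "-0" "-(2*pi)"] by simp
  have eqi: "g (-(x + -(2*pi))) = f (0 + 1 * cis x)/((0 + 1 * cis x)-w) * 1 * \<i> * cis x" for x
  proof -
    have c1: "cis (2*pi - x) = inverse (cis x)"
      by (simp add: cis_divide[symmetric] inverse_eq_divide) 
    have cS: "cis x \<in> S1" by (simp add: S1_def)
    have ne: "cis x - w \<noteq> 0" using w by (metis norm_cis order.irrefl eq_iff_diff_eq_0)
    have ne2: "1 - w * inverse (cis x) \<noteq> 0" using nz[of "inverse (cis x)"] by simp
    have "g (-(x + -(2*pi))) = G (inverse (cis x)) * \<i>"
      unfolding g_def by (simp add: c1)
    also have "\<dots> = h (inverse (cis x)) / (1 - w * inverse (cis x)) * \<i>" by (simp add: G_def)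
    also have "\<dots> = f (cis x) / (1 - w * inverse (cis x)) * \<i>" using eq[OF cS] by simp
    also have "\<dots> = f (cis x) / (cis x - w) * \<i> * cis x"
      using ne ne2 by (simp add: field_simps)
    finally show ?thesis by simp
  qed
  have "2 * of_real pi * \<i> * G 0 = 2 * of_real pi * \<i> * f w"
    using has_integral_unique[OF J3[unfolded eqi] J1] .
  then show ?thesis by (simp add: G_def)
qed

lemma glue:
  assumes f: "dfun f" and h: "dfun h" and eq: "\<And>z. z \<in> S1 \<Longrightarrow> f z = h (inverse z)"
  shows "f 0 = h 0" "\<And>z. z \<in> S1 \<Longrightarrow> f z = h 0"
proof -
  show "f 0 = h 0" using glue_ball[OF f h eq] by simp
  fix z assume z: "z \<in> S1"
  have "continuous_on (closure (ball 0 1)) f" using f by (simp add: dfun_def)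
  moreover have "z \<in> closure (ball (0::complex) 1)" using z by (simp add: S1_def)
  ultimately show "f z = h 0"
    using continuous_constant_on_closure[of "ball 0 1" f "h 0" z] glue_ball[OF f h eq] by simp
qed



lemma wiener_plus_scalar:
  fixes c :: "int \<Rightarrow> complex" and v :: "complex \<Rightarrow> complex"
  assumes sm: "(\<lambda>k. norm (c k)) summable_on UNIV" and neg: "\<And>k. k < 0 \<Longrightarrow> c k = 0"
    and hs: "\<And>z. z \<in> S1 \<Longrightarrow> ((\<lambda>k. c k * z powi k) has_sum v z) UNIV"
  shows "\<exists>f. dfun f \<and> f 0 = c 0 \<and> (\<forall>z\<in>S1. v z = f z)"
proof -
  define a where "a n = c (int n)" for n
  have "(\<lambda>k. norm (c k)) summable_on range int" using sm by (rule summable_on_subset) auto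
  then have "((\<lambda>k. norm (c k)) \<circ> int) summable_on UNIV" by (subst (asm) summable_on_reindex) auto
  then have sa: "summable (\<lambda>n. norm (a n))" unfolding a_def o_def by (rule summable_on_imp_summable)
  define f where "f z = (\<Sum>n. a n * z ^ n)" for z
  have ul: "uniform_limit (cball 0 1) (\<lambda>N z. \<Sum>i<N. a i * z ^ i) f sequentially"
    unfolding f_def
  proof (rule Weierstrass_m_test[OF _ sa])
    fix n and z :: complex assume "z \<in> cball 0 1"
    then have "norm z \<le> 1" by simp
    then have "norm (z ^ n) \<le> 1" by (simp add: norm_power power_le_one)
    then show "norm (a n * z ^ n) \<le> norm (a n)"
      by (simp add: norm_mult mult_left_le)
  qed
  obtain "continuous_on (cball 0 1) f" "f holomorphic_on ball 0 1"
    by (rule holomorphic_uniform_limit[OF _ ul]) (auto intro!: always_eventually continuous_intros holomorphic_intros)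
  then have df: "dfun f" by (simp add: dfun_def)
  have f0: "f 0 = c 0" unfolding f_def using powser_zero[of a] by (simp add: a_def)
  have "v z = f z" if z: "z \<in> S1" for z
  proof -
    have "((\<lambda>k. c k * z powi k) has_sum v z) (range int)"
      using hs[OF z] by (subst (asm) has_sum_cong_neutral[where T="range int"]) 
        (auto simp: neg image_iff intro: neg, metis neg nonneg_int_cases not_le)
    then have "(((\<lambda>k. c k * z powi k) \<circ> int) has_sum v z) UNIV" by (subst (asm) has_sum_reindex) auto
    then have "(\<lambda>n. a n * z ^ n) sums v z" unfolding a_def o_def
      by (intro has_sum_imp_sums) (simp add: power_int_of_nat)
    then show ?thesis unfolding f_def by (simp add: sums_iff)
  qed
  then show ?thesis using df f0 by blast
qed



lemma S1_inverse: "z \<in> S1 \<Longrightarrow> inverse z \<in> S1" by (simp add: S1_def norm_inverse)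

lemma wiener_minus_scalar:
  fixes c :: "int \<Rightarrow> complex" and v :: "complex \<Rightarrow> complex"
  assumes sm: "(\<lambda>k. norm (c k)) summable_on UNIV" and pos: "\<And>k. k > 0 \<Longrightarrow> c k = 0"
    and hs: "\<And>z. z \<in> S1 \<Longrightarrow> ((\<lambda>k. c k * z powi k) has_sum v z) UNIV"
  shows "\<exists>f. dfun f \<and> f 0 = c 0 \<and> (\<forall>z\<in>S1. v z = f (inverse z))"
proof -
  have inj: "inj_on uminus (UNIV::int set)" by simp
  have im: "uminus ` (UNIV::int set) = UNIV" by (simp add: surj_def)
  have sm': "(\<lambda>k. norm (c (-k))) summable_on UNIV"
    using sm summable_on_reindex[OF inj, of "\<lambda>k. norm (c k)"] by (simp add: im o_def)
  have hs': "((\<lambda>k. c (-k) * w powi k) has_sum v (inverse w)) UNIV" if w: "w \<in> S1" for w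
  proof -
    have "((\<lambda>k. c k * (inverse w) powi k) has_sum v (inverse w)) UNIV"
      using hs[OF S1_inverse[OF w]] .
    then have "(((\<lambda>k. c k * (inverse w) powi k) \<circ> uminus) has_sum v (inverse w)) UNIV"
      using has_sum_reindex[OF inj, of "\<lambda>k. c k * (inverse w) powi k"] by (simp add: im)
    then show ?thesis by (simp add: o_def power_int_minus power_int_inverse)
  qed
  obtain f where f: "dfun f" "f 0 = c (-0)" "\<forall>w\<in>S1. v (inverse w) = f w"
    using wiener_plus_scalar[of "\<lambda>k. c (-k)" "\<lambda>w. v (inverse w)", OF sm' _ hs'] pos by force
  have "v z = f (inverse z)" if "z \<in> S1" for z
    using f(3) S1_inverse[OF that] by force
  then show ?thesis using f by auto
qed

definition dmat :: "loop \<Rightarrow> bool" where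
  "dmat M \<longleftrightarrow> (\<forall>i j. dfun (\<lambda>z. M z $ i $ j))"

definition plus_at :: "loop \<Rightarrow> cmat \<Rightarrow> bool" where
  "plus_at A a \<longleftrightarrow> (\<exists>B. dmat B \<and> B 0 = a \<and> (\<forall>z\<in>S1. A z = B z))"

definition minus_at :: "loop \<Rightarrow> cmat \<Rightarrow> bool" where
  "minus_at A a \<longleftrightarrow> (\<exists>B. dmat B \<and> B 0 = a \<and> (\<forall>z\<in>S1. A z = B (inverse z)))"

lemma wiener_plus:
  assumes w: "wiener_coeffs g c" and neg: "\<forall>k<0. c k = 0"
  shows "plus_at g (c 0)"
proof -
  have "\<forall>i j. \<exists>f. dfun f \<and> f 0 = c 0 $ i $ j \<and> (\<forall>z\<in>S1. g z $ i $ j = f z)"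
    using w neg unfolding wiener_coeffs_def
    by (intro allI wiener_plus_scalar) auto
  then obtain F where F: "\<And>i j. dfun (F i j) \<and> F i j 0 = c 0 $ i $ j \<and> (\<forall>z\<in>S1. g z $ i $ j = F i j z)"
    by metis
  define B where "B z = (\<chi> i j. F i j z)" for z
  have "dmat B" using F by (simp add: dmat_def B_def)
  moreover have "B 0 = c 0" using F by (simp add: B_def vec_eq_iff)
  moreover have "\<forall>z\<in>S1. g z = B z" using F by (simp add: B_def vec_eq_iff)
  ultimately show ?thesis unfolding plus_at_def by blast
qed

lemma wiener_minus:
  assumes w: "wiener_coeffs g c" and pos: "\<forall>k>0. c k = 0"
  shows "minus_at g (c 0)"
proof -
  have "\<forall>i j. \<exists>f. dfun f \<and> f 0 = c 0 $ i $ j \<and> (\<forall>z\<in>S1. g z $ i $ j = f (inverse z))"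
    using w pos unfolding wiener_coeffs_def
    by (intro allI wiener_minus_scalar) auto
  then obtain F where F: "\<And>i j. dfun (F i j) \<and> F i j 0 = c 0 $ i $ j \<and> (\<forall>z\<in>S1. g z $ i $ j = F i j (inverse z))"
    by metis
  define B where "B z = (\<chi> i j. F i j z)" for z
  have "dmat B" using F by (simp add: dmat_def B_def)
  moreover have "B 0 = c 0" using F by (simp add: B_def vec_eq_iff)
  moreover have "\<forall>z\<in>S1. g z = B (inverse z)" using F by (simp add: B_def vec_eq_iff)
  ultimately show ?thesis unfolding minus_at_def by blast
qed

lemma plus_star_at: "LSU2_plus_star g \<Longrightarrow> plus_at g (mat 1)"
  unfolding LSU2_plus_star_def using wiener_plus by metis
lemma plus_ex: "LSU2_plus g \<Longrightarrow> \<exists>a. plus_at g a"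
  unfolding LSU2_plus_def using wiener_plus by metis
lemma minus_star_at: "LSU2_minus_star g \<Longrightarrow> minus_at g (mat 1)"
  unfolding LSU2_minus_star_def using wiener_minus by metis
lemma minus_ex: "LSU2_minus g \<Longrightarrow> \<exists>a. minus_at g a"
  unfolding LSU2_minus_def using wiener_minus by metis

lemma uniq:
  assumes "plus_at A a" "minus_at B b" "\<And>z. z \<in> S1 \<Longrightarrow> A z = B z"
  shows "a = b" "\<And>z. z \<in> S1 \<Longrightarrow> A z = a"
proof -
  obtain A' where A': "dmat A'" "A' 0 = a" "\<forall>z\<in>S1. A z = A' z" using assms(1) plus_at_def by auto
  obtain B' where B': "dmat B'" "B' 0 = b" "\<forall>z\<in>S1. B z = B' (inverse z)" using assms(2) minus_at_def by auto
  have e: "\<And>z. z \<in> S1 \<Longrightarrow> (\<lambda>z. A' z $ i $ j) z = (\<lambda>w. B' w $ i $ j) (inverse z)" for i j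
    using A' B' assms(3) by simp
  have g1: "A' 0 $ i $ j = B' 0 $ i $ j" for i j
    using glue(1)[of "\<lambda>z. A' z $ i $ j" "\<lambda>w. B' w $ i $ j", OF _ _ e] A'(1) B'(1) by (simp add: dmat_def)
  have g2: "\<And>z. z \<in> S1 \<Longrightarrow> A' z $ i $ j = B' 0 $ i $ j" for i j
    using glue(2)[of "\<lambda>z. A' z $ i $ j" "\<lambda>w. B' w $ i $ j", OF _ _ e] A'(1) B'(1) by (simp add: dmat_def)
  show ab: "a = b" using g1 A' B' by (simp add: vec_eq_iff)
  fix z assume "z \<in> S1"
  then show "A z = a" using g2 A' B' ab by (simp add: vec_eq_iff)
qed



lemma dfun_const: "dfun (\<lambda>z. c)" by (simp add: dfun_def holomorphic_on_const continuous_on_const)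
lemma dfun_id: "dfun (\<lambda>z. z)" by (simp add: dfun_def holomorphic_on_id continuous_on_id)
lemma dfun_add: "dfun f \<Longrightarrow> dfun g \<Longrightarrow> dfun (\<lambda>z. f z + g z)"
  unfolding dfun_def by (auto intro!: holomorphic_intros continuous_intros)
lemma dfun_diff: "dfun f \<Longrightarrow> dfun g \<Longrightarrow> dfun (\<lambda>z. f z - g z)"
  unfolding dfun_def by (auto intro!: holomorphic_intros continuous_intros)
lemma dfun_mult: "dfun f \<Longrightarrow> dfun g \<Longrightarrow> dfun (\<lambda>z. f z * g z)"
  unfolding dfun_def by (auto intro!: holomorphic_intros continuous_intros)
lemma dfun_uminus: "dfun f \<Longrightarrow> dfun (\<lambda>z. - f z)"
  unfolding dfun_def by (auto intro!: holomorphic_intros continuous_intros)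
lemma dfun_divide: "dfun f \<Longrightarrow> dfun g \<Longrightarrow> (\<And>z. norm z \<le> 1 \<Longrightarrow> g z \<noteq> 0) \<Longrightarrow> dfun (\<lambda>z. f z / g z)"
  unfolding dfun_def by (auto intro!: holomorphic_intros continuous_intros)

lemma Re_pos_Delta:
  assumes p: "\<bar>p / 2\<bar> < 1" and z: "norm z \<le> 1"
  shows "0 < Re (1 + (complex_of_real (p / 2))\<^sup>2 * z\<^sup>2)"
proof -
  have "\<bar>Re (z\<^sup>2)\<bar> \<le> norm (z\<^sup>2)" by (rule abs_Re_le_cmod)
  also have "\<dots> \<le> 1" using z by (simp add: norm_power power_le_one)
  finally have r: "- 1 \<le> Re (z\<^sup>2)" by simp
  have a: "(p/2)\<^sup>2 < 1" using p by (simp only: abs_square_less_1)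
  have "Re (1 + (complex_of_real (p / 2))\<^sup>2 * z\<^sup>2) = 1 + (p/2)\<^sup>2 * Re (z\<^sup>2)"
    by (simp flip: of_real_power)
  moreover have "(p/2)\<^sup>2 * Re (z\<^sup>2) \<ge> - ((p/2)\<^sup>2)" using r
    by (metis mult.commute mult_minus1 mult_right_mono zero_le_power2)
  ultimately show ?thesis using a by linarith
qed

lemma dfun_Dp: assumes "\<bar>p / 2\<bar> < 1" shows "dfun (Delta_plus p)"
proof -
  have nn: "1 + (complex_of_real (p / 2))\<^sup>2 * z\<^sup>2 \<notin> \<real>\<^sub>\<le>\<^sub>0" if "norm z \<le> 1" for z
    using Re_pos_Delta[OF assms that] by (metis complex_nonpos_Reals_iff not_le)
  have "(\<lambda>z. csqrt (1 + (complex_of_real (p / 2))\<^sup>2 * z\<^sup>2)) holomorphic_on ball 0 1"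
    using nn by (intro holomorphic_intros) auto
  moreover have "continuous_on (cball 0 1) (\<lambda>z. csqrt (1 + (complex_of_real (p / 2))\<^sup>2 * z\<^sup>2))"
  proof (rule continuous_on_compose2[OF continuous_on_csqrt])
    show "continuous_on (cball 0 1) (\<lambda>z. 1 + (complex_of_real (p / 2))\<^sup>2 * z\<^sup>2)"
      by (intro continuous_intros)
    show "(\<lambda>z. 1 + (complex_of_real (p / 2))\<^sup>2 * z\<^sup>2) ` cball 0 1 \<subseteq> - \<real>\<^sub>\<le>\<^sub>0"
    proof (rule image_subsetI)
      fix z :: complex assume "z \<in> cball 0 1"
      then have "norm z \<le> 1" by simp
      from nn[OF this] show "1 + (complex_of_real (p / 2))\<^sup>2 * z\<^sup>2 \<in> - \<real>\<^sub>\<le>\<^sub>0" by simp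
    qed
  qed
  ultimately show ?thesis unfolding dfun_def Delta_plus_def[abs_def] by simp
qed

lemma Dp_nz: assumes "\<bar>p / 2\<bar> < 1" "norm z \<le> 1" shows "Delta_plus p z \<noteq> 0"
proof -
  have "1 + (complex_of_real (p / 2))\<^sup>2 * z\<^sup>2 \<noteq> 0"
    using Re_pos_Delta[OF assms] by (metis less_irrefl zero_complex.sel(1))
  then show ?thesis unfolding Delta_plus_def by (metis csqrt_eq_0)
qed

lemma Dp_0: "Delta_plus p 0 = 1" by (simp add: Delta_plus_def)

lemma Dp_sq: "(Delta_plus p z)\<^sup>2 = 1 + (complex_of_real (p / 2))\<^sup>2 * z\<^sup>2"
  by (simp add: Delta_plus_def)

lemma Dm_Dp: "z \<noteq> 0 \<Longrightarrow> Delta_minus q z = Delta_plus q (inverse z)"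
  by (simp add: Delta_minus_def Delta_plus_def power_inverse)

lemma dfun_div_Dp: "dfun f \<Longrightarrow> \<bar>p / 2\<bar> < 1 \<Longrightarrow> dfun (\<lambda>z. f z / Delta_plus p z)"
  by (intro dfun_divide dfun_Dp Dp_nz)

lemma dmat_mat2: "dfun a \<Longrightarrow> dfun b \<Longrightarrow> dfun c \<Longrightarrow> dfun d \<Longrightarrow> dmat (\<lambda>z. mat2 (a z) (b z) (c z) (d z))"
  unfolding dmat_def by (auto simp: forall_2 mat2_nth)

lemma dmat_entries: "dmat A \<Longrightarrow> dfun (\<lambda>z. A z $ i $ j)" by (simp add: dmat_def)

lemma dmat_mult: "dmat A \<Longrightarrow> dmat B \<Longrightarrow> dmat (\<lambda>z. A z ** B z)"
  unfolding dmat_def mult_nth2 by (auto intro!: dfun_add dfun_mult)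

lemma dmat_adj2: "dmat A \<Longrightarrow> dmat (\<lambda>z. adj2 (A z))"
  unfolding adj2_def by (intro dmat_mat2 dfun_uminus dmat_entries)

lemma dmat_const: "dmat (\<lambda>z. C)" by (simp add: dmat_def dfun_const)

lemma plus_cong: "plus_at A a \<Longrightarrow> (\<And>z. z \<in> S1 \<Longrightarrow> A z = B z) \<Longrightarrow> plus_at B a"
  unfolding plus_at_def by auto
lemma minus_cong: "minus_at A a \<Longrightarrow> (\<And>z. z \<in> S1 \<Longrightarrow> A z = B z) \<Longrightarrow> minus_at B a"
  unfolding minus_at_def by auto

lemma plus_mult: "plus_at A a \<Longrightarrow> plus_at B b \<Longrightarrow> plus_at (\<lambda>z. A z ** B z) (a ** b)"
  unfolding plus_at_def
proof (elim exE conjE)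
  fix A' B' assume "dmat A'" "A' 0 = a" "\<forall>z\<in>S1. A z = A' z" "dmat B'" "B' 0 = b" "\<forall>z\<in>S1. B z = B' z"
  then show "\<exists>C. dmat C \<and> C 0 = a ** b \<and> (\<forall>z\<in>S1. A z ** B z = C z)"
    by (intro exI[of _ "\<lambda>z. A' z ** B' z"]) (auto intro: dmat_mult)
qed

lemma minus_mult: "minus_at A a \<Longrightarrow> minus_at B b \<Longrightarrow> minus_at (\<lambda>z. A z ** B z) (a ** b)"
  unfolding minus_at_def
proof (elim exE conjE)
  fix A' B' assume "dmat A'" "A' 0 = a" "\<forall>z\<in>S1. A z = A' (inverse z)" "dmat B'" "B' 0 = b" "\<forall>z\<in>S1. B z = B' (inverse z)"
  then show "\<exists>C. dmat C \<and> C 0 = a ** b \<and> (\<forall>z\<in>S1. A z ** B z = C (inverse z))"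
    by (intro exI[of _ "\<lambda>z. A' z ** B' z"]) (auto intro: dmat_mult)
qed

lemma plus_adj: "plus_at A a \<Longrightarrow> plus_at (\<lambda>z. adj2 (A z)) (adj2 a)"
  unfolding plus_at_def
proof (elim exE conjE)
  fix A' assume "dmat A'" "A' 0 = a" "\<forall>z\<in>S1. A z = A' z"
  then show "\<exists>C. dmat C \<and> C 0 = adj2 a \<and> (\<forall>z\<in>S1. adj2 (A z) = C z)"
    by (intro exI[of _ "\<lambda>z. adj2 (A' z)"]) (auto intro: dmat_adj2)
qed

lemma minus_adj: "minus_at A a \<Longrightarrow> minus_at (\<lambda>z. adj2 (A z)) (adj2 a)"
  unfolding minus_at_def
proof (elim exE conjE)
  fix A' assume "dmat A'" "A' 0 = a" "\<forall>z\<in>S1. A z = A' (inverse z)"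
  then show "\<exists>C. dmat C \<and> C 0 = adj2 a \<and> (\<forall>z\<in>S1. adj2 (A z) = C (inverse z))"
    by (intro exI[of _ "\<lambda>z. adj2 (A' z)"]) (auto intro: dmat_adj2)
qed

lemma plus_const: "plus_at (\<lambda>z. C) C"
  unfolding plus_at_def by (auto intro!: exI[of _ "\<lambda>z. C"] dmat_const)
lemma minus_const: "minus_at (\<lambda>z. C) C"
  unfolding minus_at_def by (auto intro!: exI[of _ "\<lambda>z. C"] dmat_const)



lemma plus_self: "dmat A \<Longrightarrow> plus_at A (A 0)"
  unfolding plus_at_def by auto

lemma xi_plus_eq: "xi_plus p a = (\<lambda>z. mat2 (1 / Delta_plus p z)
   (\<i> / 2 * complex_of_real p * exp (- \<i> * complex_of_real a) * z / Delta_plus p z)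
   (\<i> / 2 * complex_of_real p * exp (\<i> * complex_of_real a) * z / Delta_plus p z) (1 / Delta_plus p z))"
  by (simp add: xi_plus_def[abs_def] Let_def)

lemma xi_plus_at: assumes "\<bar>p / 2\<bar> < 1" shows "plus_at (xi_plus p a) (mat 1)"
proof -
  have "dmat (xi_plus p a)" unfolding xi_plus_eq
    by (intro dmat_mat2 dfun_div_Dp dfun_const dfun_mult dfun_id assms)
  from plus_self[OF this] show ?thesis by (simp add: xi_plus_def Dp_0 mat2_one)
qed

lemma xi_minus_at: assumes "\<bar>q / 2\<bar> < 1" shows "minus_at (xi_minus q b) (mat 1)"
proof -
  define W where "W = (\<lambda>w. mat2 (1 / Delta_plus q w)
   (- \<i> / 2 * complex_of_real q * exp (\<i> * complex_of_real b) * w / Delta_plus q w)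
   (- \<i> / 2 * complex_of_real q * exp (- \<i> * complex_of_real b) * w / Delta_plus q w) (1 / Delta_plus q w))"
  have "dmat W" unfolding W_def
    by (intro dmat_mat2 dfun_div_Dp dfun_const dfun_mult dfun_id assms)
  moreover have "W 0 = mat 1" by (simp add: W_def Dp_0 mat2_one)
  moreover have "xi_minus q b z = W (inverse z)" if "z \<in> S1" for z
  proof -
    have "z \<noteq> 0" using that by (auto simp: S1_def)
    then show ?thesis by (simp add: W_def xi_minus_def Dm_Dp Let_def)
  qed
  ultimately show ?thesis unfolding minus_at_def by blast
qed

lemma U_plus: assumes "\<bar>p n / 2\<bar> < 1" shows "\<exists>a. plus_at (Umat u p n m) a"
proof -
  have e: "Umat u p n m = (\<lambda>z. mat2 (exp (- \<i> * complex_of_real ((u (n + 1) m - u n m) / 2)) / Delta_plus (p n) z)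
     (\<i> / 2 * complex_of_real (p n) * z / Delta_plus (p n) z)
     (\<i> / 2 * complex_of_real (p n) * z / Delta_plus (p n) z)
     (cnj (exp (- \<i> * complex_of_real ((u (n + 1) m - u n m) / 2))) / Delta_plus (p n) z))"
    by (simp add: Umat_def[abs_def] Let_def)
  have "dmat (Umat u p n m)" unfolding e
    by (intro dmat_mat2 dfun_div_Dp dfun_const dfun_mult dfun_id assms)
  then show ?thesis using plus_self by blast
qed

lemma V_xi: "Vmat u q n m z = xi_minus (q m) ((u n (m + 1) + u n m) / 2) z"
  by (simp add: Vmat_def xi_minus_def Let_def exp_cnj mat2_eq_iff ac_simps)

lemma det_xi_plus: assumes "\<bar>p / 2\<bar> < 1" "norm z \<le> 1" shows "det (xi_plus p a z) = 1"
proof -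
  have D: "Delta_plus p z \<noteq> 0" using Dp_nz[OF assms] .
  have sq: "(Delta_plus p z)\<^sup>2 = 1 + (complex_of_real (p / 2))\<^sup>2 * z\<^sup>2" by (rule Dp_sq)
  have ee: "exp (- \<i> * complex_of_real a) * exp (\<i> * complex_of_real a) = 1"
    by (simp add: exp_add[symmetric])
  have "det (xi_plus p a z) = (1 - (\<i> / 2 * complex_of_real p)^2 * z^2 * (exp (- \<i> * complex_of_real a) * exp (\<i> * complex_of_real a))) / (Delta_plus p z)\<^sup>2"
    using D by (simp add: xi_plus_def Let_def mat2_det field_simps power2_eq_square)
  also have "\<dots> = (Delta_plus p z)\<^sup>2 / (Delta_plus p z)\<^sup>2" unfolding ee sq
    by (simp add: power_mult_distrib power_divide)
  also have "\<dots> = 1" using D by simp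
  finally show ?thesis .
qed

lemma det_xi_minus: assumes "\<bar>q / 2\<bar> < 1" "z \<in> S1" shows "det (xi_minus q b z) = 1"
proof -
  have z0: "z \<noteq> 0" using assms(2) by (auto simp: S1_def)
  have nz: "norm (inverse z) \<le> 1" using assms(2) by (simp add: S1_def norm_inverse)
  have D: "Delta_plus q (inverse z) \<noteq> 0" using Dp_nz[OF assms(1) nz] .
  have sq: "(Delta_plus q (inverse z))\<^sup>2 = 1 + (complex_of_real (q / 2))\<^sup>2 * (inverse z)\<^sup>2" by (rule Dp_sq)
  have ee: "exp (- \<i> * complex_of_real b) * exp (\<i> * complex_of_real b) = 1"
    by (simp add: exp_add[symmetric])
  have "det (xi_minus q b z) = (1 - (\<i> / 2 * complex_of_real q)^2 * (inverse z)^2 * (exp (- \<i> * complex_of_real b) * exp (\<i> * complex_of_real b))) / (Delta_plus q (inverse z))\<^sup>2"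
    using D z0 by (simp add: xi_minus_def Let_def mat2_det Dm_Dp field_simps power2_eq_square)
  also have "\<dots> = (Delta_plus q (inverse z))\<^sup>2 / (Delta_plus q (inverse z))\<^sup>2" unfolding ee sq
    by (simp add: power_mult_distrib power_divide)
  also have "\<dots> = 1" using D by simp
  finally show ?thesis .
qed

definition sd :: "real \<Rightarrow> cmat" where
  "sd x = mat2 (exp (- \<i> * complex_of_real (x/2))) 0 0 (exp (\<i> * complex_of_real (x/2)))"

lemma sd_add: "sd x ** sd y = sd (x + y)"
  by (simp add: sd_def mat2_mult mat2_eq_iff exp_add[symmetric]) (simp add: algebra_simps diff_divide_distrib add_divide_distrib)

lemma sd_0: "sd 0 = mat 1" by (simp add: sd_def mat2_one)

lemma det_sd: "det (sd x) = 1" by (simp add: sd_def mat2_det exp_add[symmetric])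




lemma exp3: "x + y + w = (0::complex) \<Longrightarrow> exp x * exp y * exp w = 1"
  by (simp add: exp_add[symmetric])
lemma exp2: "x + y = (w::complex) \<Longrightarrow> exp x * exp y = exp w"
  by (simp add: exp_add[symmetric])

lemma U_xi: "Umat u p n m z = sd (a - u n m) ** xi_plus (p n) ((u (n+1) m + u n m)/2 - a) z ** sd (u (n+1) m - a)"
proof -
  define A where "A = a - u n m"
  define B where "B = u (n+1) m - a"
  define al where "al = (u (n+1) m + u n m)/2 - a"
  define D where "D = Delta_plus (p n) z"
  define e where "e = exp (- \<i> * complex_of_real ((u (n + 1) m - u n m) / 2))"
  define ofd where "ofd = \<i> / 2 * complex_of_real (p n) * z"
  have h1: "exp (- \<i> * complex_of_real (A/2)) * exp (- \<i> * complex_of_real (B/2)) = e"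
    unfolding e_def A_def B_def by (rule exp2) (simp add: algebra_simps diff_divide_distrib)
  have h4: "exp (\<i> * complex_of_real (A/2)) * exp (\<i> * complex_of_real (B/2)) = cnj e"
    unfolding e_def A_def B_def by (simp add: exp_cnj, rule exp2) (simp add: algebra_simps diff_divide_distrib)
  have h2: "exp (- \<i> * complex_of_real (A/2)) * exp (- \<i> * complex_of_real al) * exp (\<i> * complex_of_real (B/2)) = 1"
    unfolding al_def A_def B_def by (rule exp3) (simp add: algebra_simps diff_divide_distrib add_divide_distrib)
  have h3: "exp (\<i> * complex_of_real (A/2)) * exp (\<i> * complex_of_real al) * exp (- \<i> * complex_of_real (B/2)) = 1"
    unfolding al_def A_def B_def by (rule exp3) (simp add: algebra_simps diff_divide_distrib add_divide_distrib)
  have L: "Umat u p n m z = mat2 (e/D) (ofd/D) (ofd/D) (cnj e/D)"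
    by (simp add: Umat_def Let_def e_def ofd_def D_def)
  have R: "sd A ** xi_plus (p n) al z ** sd B = mat2
     (exp (- \<i> * complex_of_real (A/2)) * exp (- \<i> * complex_of_real (B/2)) / D)
     (exp (- \<i> * complex_of_real (A/2)) * exp (- \<i> * complex_of_real al) * exp (\<i> * complex_of_real (B/2)) * ofd / D)
     (exp (\<i> * complex_of_real (A/2)) * exp (\<i> * complex_of_real al) * exp (- \<i> * complex_of_real (B/2)) * ofd / D)
     (exp (\<i> * complex_of_real (A/2)) * exp (\<i> * complex_of_real (B/2)) / D)"
    by (simp add: sd_def xi_plus_def Let_def mat2_mult mat2_eq_iff D_def ofd_def)
  show ?thesis unfolding A_def[symmetric] B_def[symmetric] al_def[symmetric] L R h1 h2 h3 h4 by simp
qed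



lemma factor_swap:
  assumes "det P = 1" "det M' = 1" "P' ** M' = P ** X"
  shows "adj2 P ** P' = X ** adj2 M'"
proof -
  have "adj2 P ** P' = adj2 P ** P' ** (M' ** adj2 M')" using adj2_right[OF assms(2)] by simp
  also have "\<dots> = adj2 P ** (P' ** M') ** adj2 M'" by (simp add: matrix_mul_assoc)
  also have "\<dots> = (adj2 P ** P) ** X ** adj2 M'" using assms(3) by (simp add: matrix_mul_assoc)
  also have "\<dots> = X ** adj2 M'" using adj2_left[OF assms(1)] by simp
  finally show ?thesis .
qed

lemma recover:
  assumes "det P = 1" "adj2 P ** P' = mat 1"
  shows "P' = P"
proof -
  have "P' = (P ** adj2 P) ** P'" using adj2_right[OF assms(1)] by simp
  also have "\<dots> = P ** (adj2 P ** P')" by (simp add: matrix_mul_assoc)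
  finally show ?thesis using assms(2) by simp
qed

lemma adj2_one: "adj2 (mat 1) = mat 1"
  by (simp add: adj2_def mat2_one mat2_nth)

lemma LSU2_det: "LSU2 g \<Longrightarrow> z \<in> S1 \<Longrightarrow> det (g z) = 1"
  unfolding LSU2_def by blast

lemma S1_le: "z \<in> S1 \<Longrightarrow> norm z \<le> 1" by (simp add: S1_def)

theorem theorem2p1:
  fixes F Fp Fm Gm Gp :: "int \<Rightarrow> int \<Rightarrow> loop"
    and u :: "int \<Rightarrow> int \<Rightarrow> real" and p q :: "int \<Rightarrow> real"
  assumes hp: "\<And>n. 0 < \<bar>p n / 2\<bar> \<and> \<bar>p n / 2\<bar> < 1"
    and hq: "\<And>m. 0 < \<bar>q m / 2\<bar> \<and> \<bar>q m / 2\<bar> < 1"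
    and hF: "discrete_extended_frame F u p q"
    and hFp: "\<And>n m. LSU2_plus_star (Fp n m)"
    and hFm: "\<And>n m. LSU2_minus (Fm n m)"
    and hGm: "\<And>n m. LSU2_minus_star (Gm n m)"
    and hGp: "\<And>n m. LSU2_plus (Gp n m)"
    and hFdec: "\<And>n m z. z \<in> S1 \<Longrightarrow> F n m z = Fp n m z ** Fm n m z"
    and hGdec: "\<And>n m z. z \<in> S1 \<Longrightarrow> F n m z = Gm n m z ** Gp n m z"
  shows "(\<forall>n m m'. \<forall>z\<in>S1. Fp n m z = Fp n m' z) \<and>
         (\<forall>n n' m. \<forall>z\<in>S1. Gm n m z = Gm n' m z) \<and>
         (\<forall>n m. \<forall>z\<in>S1. matrix_inv (Fp n m z) ** Fp (n + 1) m z =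
              xi_plus (p n) (u (n + 1) 0 / 2 + u n 0 / 2 - u 0 0) z) \<and>
         (\<forall>n m. \<forall>z\<in>S1. matrix_inv (Gm n m z) ** Gm n (m + 1) z =
              xi_minus (q m) (u 0 (m + 1) / 2 + u 0 m / 2) z)"
proof -
  have p1: "\<bar>p n / 2\<bar> < 1" for n using hp by auto
  have q1: "\<bar>q m / 2\<bar> < 1" for m using hq by auto
  have F00: "\<And>z. z \<in> S1 \<Longrightarrow> F 0 0 z = mat 1"
    and FU: "\<And>n m z. z \<in> S1 \<Longrightarrow> F (n + 1) m z = F n m z ** Umat u p n m z"
    and FV: "\<And>n m z. z \<in> S1 \<Longrightarrow> F n (m + 1) z = F n m z ** Vmat u q n m z"
    and dF: "\<And>n m z. z \<in> S1 \<Longrightarrow> det (F n m z) = 1"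
    using hF unfolding discrete_extended_frame_def by (auto intro: LSU2_det)
  have dFp: "\<And>n m z. z \<in> S1 \<Longrightarrow> det (Fp n m z) = 1"
    using hFp unfolding LSU2_plus_star_def by (auto intro: LSU2_det)
  have dFm: "\<And>n m z. z \<in> S1 \<Longrightarrow> det (Fm n m z) = 1"
    using hFm unfolding LSU2_minus_def by (auto intro: LSU2_det)
  have dGm: "\<And>n m z. z \<in> S1 \<Longrightarrow> det (Gm n m z) = 1"
    using hGm unfolding LSU2_minus_star_def by (auto intro: LSU2_det)
  have dGp: "\<And>n m z. z \<in> S1 \<Longrightarrow> det (Gp n m z) = 1"
    using hGp unfolding LSU2_plus_def by (auto intro: LSU2_det)
  have aFp: "plus_at (Fp n m) (mat 1)" for n m using hFp plus_star_at by blast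
  have aGm: "minus_at (Gm n m) (mat 1)" for n m using hGm minus_star_at by blast
  have aV: "minus_at (Vmat u q n m) (mat 1)" for n m
    using xi_minus_at[OF q1] V_xi[of u q n m] by (metis minus_cong)

  have stepF: "Fp n (m + 1) z = Fp n m z" if z: "z \<in> S1" for n m z
  proof -
    obtain b1 where b1: "minus_at (Fm n m) b1" using minus_ex hFm by blast
    obtain b2 where b2: "minus_at (Fm n (m+1)) b2" using minus_ex hFm by blast
    have A: "plus_at (\<lambda>z. adj2 (Fp n m z) ** Fp n (m+1) z) (mat 1)"
      using plus_mult[OF plus_adj[OF aFp] aFp] by (simp add: adj2_one)
    have B: "minus_at (\<lambda>z. Fm n m z ** Vmat u q n m z ** adj2 (Fm n (m+1) z)) (b1 ** mat 1 ** adj2 b2)"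
      by (intro minus_mult minus_adj b1 b2 aV)
    have E: "adj2 (Fp n m z) ** Fp n (m+1) z = Fm n m z ** Vmat u q n m z ** adj2 (Fm n (m+1) z)"
      if z: "z \<in> S1" for z
    proof (rule factor_swap[OF dFp[OF z] dFm[OF z]])
      show "Fp n (m + 1) z ** Fm n (m + 1) z = Fp n m z ** (Fm n m z ** Vmat u q n m z)"
        using hFdec[OF z, of n "m+1"] FV[OF z, of n m] hFdec[OF z, of n m] by (simp add: matrix_mul_assoc)
    qed
    have "adj2 (Fp n m z) ** Fp n (m+1) z = mat 1" using uniq(2)[OF A B E z] z by simp
    then show ?thesis using recover dFp[OF z] by blast
  qed
  have Fp_const: "Fp n m z = Fp n 0 z" if z: "z \<in> S1" for n m z
  proof (induct m rule: int_induct[where k=0])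
    case base then show ?case by simp
  next
    case (step1 i) then show ?case using stepF[OF z, of n i] by simp
  next
    case (step2 i) then show ?case using stepF[OF z, of n "i - 1"] by simp
  qed

  have stepG: "Gm (n + 1) m z = Gm n m z" if z: "z \<in> S1" for n m z
  proof -
    obtain a1 where a1: "plus_at (Gp n m) a1" using plus_ex hGp by blast
    obtain a2 where a2: "plus_at (Gp (n+1) m) a2" using plus_ex hGp by blast
    obtain a3 where a3: "plus_at (Umat u p n m) a3" using U_plus[of p n u m] p1 by blast
    have B: "minus_at (\<lambda>z. adj2 (Gm n m z) ** Gm (n+1) m z) (mat 1)"
      using minus_mult[OF minus_adj[OF aGm] aGm] by (simp add: adj2_one)
    have A: "plus_at (\<lambda>z. Gp n m z ** Umat u p n m z ** adj2 (Gp (n+1) m z)) (a1 ** a3 ** adj2 a2)"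
      by (intro plus_mult plus_adj a1 a2 a3)
    have E: "Gp n m z ** Umat u p n m z ** adj2 (Gp (n+1) m z) = adj2 (Gm n m z) ** Gm (n+1) m z"
      if z: "z \<in> S1" for z
    proof (rule sym, rule factor_swap[OF dGm[OF z] dGp[OF z]])
      show "Gm (n + 1) m z ** Gp (n + 1) m z = Gm n m z ** (Gp n m z ** Umat u p n m z)"
        using hGdec[OF z, of "n+1" m] FU[OF z, of n m] hGdec[OF z, of n m] by (simp add: matrix_mul_assoc)
    qed
    have "adj2 (Gm n m z) ** Gm (n+1) m z = mat 1"
      using uniq[OF A B E] z E[OF z] by metis
    then show ?thesis using recover dGm[OF z] by blast
  qed
  have Gm_const: "Gm n m z = Gm 0 m z" if z: "z \<in> S1" for n m z
  proof (induct n rule: int_induct[where k=0])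
    case base then show ?case by simp
  next
    case (step1 i) then show ?case using stepG[OF z, of i m] by simp
  next
    case (step2 i) then show ?case using stepG[OF z, of "i - 1" m] by simp
  qed

  define Y where "Y n z = F n 0 z ** sd (u 0 0 - u n 0)" for n z
  define K where "K n = xi_plus (p n) ((u (n+1) 0 + u n 0)/2 - u 0 0)" for n
  have YK: "Y (n + 1) z = Y n z ** K n z" if z: "z \<in> S1" for n z
  proof -
    have "Y (n + 1) z = F n 0 z ** (sd (u 0 0 - u n 0) ** K n z ** sd (u (n+1) 0 - u 0 0)) ** sd (u 0 0 - u (n+1) 0)"
      unfolding Y_def K_def using FU[OF z, of n 0] U_xi[of u p n 0 z "u 0 0"] by simp
    also have "\<dots> = Y n z ** K n z ** (sd (u (n+1) 0 - u 0 0) ** sd (u 0 0 - u (n+1) 0))"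
      unfolding Y_def by (simp add: matrix_mul_assoc)
    also have "\<dots> = Y n z ** K n z" by (simp add: sd_add sd_0)
    finally show ?thesis .
  qed
  have dK: "det (K n z) = 1" if z: "z \<in> S1" for n z
    unfolding K_def using det_xi_plus[OF p1 S1_le[OF z]] .
  have aK: "plus_at (K n) (mat 1)" for n unfolding K_def by (rule xi_plus_at[OF p1])
  have dY: "det (Y n z) = 1" if z: "z \<in> S1" for n z
    unfolding Y_def by (simp add: det_mul dF[OF z] det_sd)
  have aY: "plus_at (Y n) (mat 1)" for n
  proof (induct n rule: int_induct[where k=0])
    case base
    show ?case by (rule plus_cong[OF plus_const]) (simp add: Y_def F00 sd_0)
  next
    case (step1 i)
    show ?case
    proof (rule plus_cong)
      show "plus_at (\<lambda>z. Y i z ** K i z) (mat 1)"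
        using plus_mult[OF step1(2) aK[of i]] by simp
    qed (simp add: YK)
  next
    case (step2 i)
    have e: "Y (i - 1) z = Y i z ** adj2 (K (i - 1) z)" if z: "z \<in> S1" for z
    proof -
      have "Y i z ** adj2 (K (i - 1) z) = Y (i - 1) z ** (K (i - 1) z ** adj2 (K (i - 1) z))"
        using YK[OF z, of "i - 1"] by (simp add: matrix_mul_assoc)
      then show ?thesis using adj2_right[OF dK[OF z]] by simp
    qed
    show ?case
    proof (rule plus_cong)
      show "plus_at (\<lambda>z. Y i z ** adj2 (K (i - 1) z)) (mat 1)"
        using plus_mult[OF step2(2) plus_adj[OF aK[of "i - 1"]]] by (simp add: adj2_one)
    qed (simp add: e)
  qed
  have FpY: "Fp n 0 z = Y n z" if z: "z \<in> S1" for n z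
  proof -
    obtain b where b: "minus_at (Fm n 0) b" using minus_ex hFm by blast
    have A: "plus_at (\<lambda>z. adj2 (Y n z) ** Fp n 0 z) (mat 1)"
      using plus_mult[OF plus_adj[OF aY] aFp] by (simp add: adj2_one)
    have B: "minus_at (\<lambda>z. sd (u n 0 - u 0 0) ** adj2 (Fm n 0 z)) (sd (u n 0 - u 0 0) ** adj2 b)"
      by (intro minus_mult minus_adj b minus_const)
    have E: "adj2 (Y n z) ** Fp n 0 z = sd (u n 0 - u 0 0) ** adj2 (Fm n 0 z)" if z: "z \<in> S1" for z
    proof (rule factor_swap[OF dY[OF z] dFm[OF z]])
      have "Y n z ** sd (u n 0 - u 0 0) = F n 0 z ** (sd (u 0 0 - u n 0) ** sd (u n 0 - u 0 0))"
        unfolding Y_def by (simp add: matrix_mul_assoc)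
      also have "\<dots> = F n 0 z" by (simp add: sd_add sd_0)
      finally show "Fp n 0 z ** Fm n 0 z = Y n z ** sd (u n 0 - u 0 0)" using hFdec[OF z] by simp
    qed
    have "adj2 (Y n z) ** Fp n 0 z = mat 1" using uniq(2)[OF A B E z] z by simp
    then show ?thesis using recover dY[OF z] by blast
  qed

  have dV: "det (Vmat u q 0 m z) = 1" if z: "z \<in> S1" for m z
    using det_xi_minus[OF q1 z] V_xi by metis
  have aZ: "minus_at (F 0 m) (mat 1)" for m
  proof (induct m rule: int_induct[where k=0])
    case base
    show ?case by (rule minus_cong[OF minus_const]) (simp add: F00)
  next
    case (step1 i)
    show ?case
    proof (rule minus_cong)
      show "minus_at (\<lambda>z. F 0 i z ** Vmat u q 0 i z) (mat 1)"
        using minus_mult[OF step1(2) aV[of 0 i]] by simp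
    qed (simp add: FV)
  next
    case (step2 i)
    have e: "F 0 (i - 1) z = F 0 i z ** adj2 (Vmat u q 0 (i - 1) z)" if z: "z \<in> S1" for z
    proof -
      have "F 0 i z ** adj2 (Vmat u q 0 (i - 1) z) = F 0 (i - 1) z ** (Vmat u q 0 (i - 1) z ** adj2 (Vmat u q 0 (i - 1) z))"
        using FV[OF z, of 0 "i - 1"] by (simp add: matrix_mul_assoc)
      then show ?thesis using adj2_right[OF dV[OF z]] by simp
    qed
    show ?case
    proof (rule minus_cong)
      show "minus_at (\<lambda>z. F 0 i z ** adj2 (Vmat u q 0 (i - 1) z)) (mat 1)"
        using minus_mult[OF step2(2) minus_adj[OF aV[of 0 "i - 1"]]] by (simp add: adj2_one)
    qed (simp add: e)
  qed
  have GmZ: "Gm 0 m z = F 0 m z" if z: "z \<in> S1" for m z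
  proof -
    obtain a where a: "plus_at (Gp 0 m) a" using plus_ex hGp by blast
    have A: "plus_at (\<lambda>z. adj2 (Gp 0 m z)) (adj2 a)" by (rule plus_adj[OF a])
    have B: "minus_at (\<lambda>z. adj2 (F 0 m z) ** Gm 0 m z) (mat 1)"
      using minus_mult[OF minus_adj[OF aZ] aGm] by (simp add: adj2_one)
    have E: "adj2 (Gp 0 m z) = adj2 (F 0 m z) ** Gm 0 m z" if z: "z \<in> S1" for z
    proof -
      have "adj2 (F 0 m z) ** Gm 0 m z = mat 1 ** adj2 (Gp 0 m z)"
        by (rule factor_swap[OF dF[OF z] dGp[OF z]]) (simp add: hGdec[OF z])
      then show ?thesis by simp
    qed
    have "adj2 (F 0 m z) ** Gm 0 m z = mat 1" using uniq[OF A B E] z E[OF z] by metis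
    then show ?thesis using recover dF[OF z] by blast
  qed

  show ?thesis
  proof (intro conjI allI ballI)
    fix n m m' z assume z: "z \<in> S1"
    show "Fp n m z = Fp n m' z" using Fp_const[OF z, of n m] Fp_const[OF z, of n m'] by simp
  next
    fix n n' m z assume z: "z \<in> S1"
    show "Gm n m z = Gm n' m z" using Gm_const[OF z, of n m] Gm_const[OF z, of n' m] by simp
  next
    fix n m z assume z: "z \<in> S1"
    have "matrix_inv (Fp n m z) ** Fp (n + 1) m z = adj2 (Y n z) ** (Y n z ** K n z)"
    proof -
      have "matrix_inv (Fp n m z) = adj2 (Fp n m z)" using matrix_inv_adj2[OF dFp[OF z, of n m]] .
      then show ?thesis using Fp_const[OF z, of n m] Fp_const[OF z, of "n+1" m]
        FpY[OF z] YK[OF z] by simp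
    qed
    also have "\<dots> = K n z" using adj2_left[OF dY[OF z]] by (simp add: matrix_mul_assoc)
    finally show "matrix_inv (Fp n m z) ** Fp (n + 1) m z = xi_plus (p n) (u (n + 1) 0 / 2 + u n 0 / 2 - u 0 0) z"
      unfolding K_def by (simp add: add_divide_distrib)
  next
    fix n m z assume z: "z \<in> S1"
    have "matrix_inv (Gm n m z) ** Gm n (m + 1) z = adj2 (F 0 m z) ** (F 0 m z ** Vmat u q 0 m z)"
    proof -
      have "matrix_inv (Gm n m z) = adj2 (Gm n m z)" using matrix_inv_adj2[OF dGm[OF z, of n m]] .
      then show ?thesis using Gm_const[OF z, of n m] Gm_const[OF z, of n "m+1"]
        GmZ[OF z] FV[OF z] by simp
    qed
    also have "\<dots> = Vmat u q 0 m z" using adj2_left[OF dF[OF z]] by (simp add: matrix_mul_assoc)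
    finally show "matrix_inv (Gm n m z) ** Gm n (m + 1) z = xi_minus (q m) (u 0 (m + 1) / 2 + u 0 m / 2) z"
      by (simp add: V_xi add_divide_distrib)
  qed
qed

end
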